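(* Let $d\ge2$, $A\in\mathcal C^{d-1}$ and $C\in\mathcal C^d_A$. Then for every $a\in[0,\tfrac12]$, $$\mu_A\Big(\big\{\mathbf x\in\mathbb I^{d-1}: |r_C(\mathbf x)-\tfrac12|\ge a\big\}\Big)\le\min\{1,\,2-4a\}.$$
   Context: $\mathbb I=[0,1]$, $\lambda$ Lebesgue measure. A $d$-copula $C\in\mathcal C^d$ is the distribution function on $\mathbb I^d$ of a probability measure $\mu_C$ with uniform univariate marginals; points are $(\mathbf x,y)$, $\mathbf x\in\mathbb I^{d-1}$. $C_{1:(d-1)}$ is the marginal copula of the first $d-1$ coordinates. For $A\in\mathcal C^{d-1}$, $\mathcal C^d_A=\{C\in\mathcal C^d: C_{1:(d-1)}=A\}$; for $d=2$, $\mu_A=\lambda$ and $\mathcal C^2_A=\mathcal C^2$. $K_C$ is the Markov kernel of $C$ w.r.t. the first $d-1$ coordinates: $\mu_C(B\times F)=\int_B K_C(\mathbf x,F)\,\mathrm d\mu_{C_{1:(d-1)}}(\mathbf x)$. Regression function $r_C(\mathbf x)=\int y\,K_C(\mathbf x,\mathrm dy)$. *)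

theory Defs
  imports "HOL-Probability.Probability"
begin

text \<open>Points of \<open>\<real>^d\<close> are pairs \<open>(x, y)\<close> with \<open>x :: real^'n\<close>, so \<open>d - 1 = CARD('n) \<ge> 1\<close>.
  A copula is identified with its probability measure \<open>\<mu>_C\<close>.\<close>

definition unit_cube :: "(real^'n::finite) set" where
  "unit_cube = {x. \<forall>i. 0 \<le> x$i \<and> x$i \<le> 1}"

definition copula_measure :: "(real^'n::finite) measure \<Rightarrow> bool" where
  "copula_measure M \<longleftrightarrow> prob_space M \<and> sets M = sets (borel :: (real^'n::finite) measure) \<and>
     (\<forall>i. distr M borel (\<lambda>x. x$i) = uniform_measure lborel {0..1::real})"

definition dcopula_measure :: "((real^'n::finite) \<times> real) measure \<Rightarrow> bool" where
  "dcopula_measure M \<longleftrightarrow> prob_space M \<and> sets M = sets (borel :: ((real^'n::finite) \<times> real) measure) \<and>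
     (\<forall>i. distr M borel (\<lambda>p. fst p $ i) = uniform_measure lborel {0..1::real}) \<and>
     distr M borel snd = uniform_measure lborel {0..1::real}"

definition markov_kernel_of ::
  "('a \<times> real) measure \<Rightarrow> 'a measure \<Rightarrow> ('a \<Rightarrow> real measure) \<Rightarrow> bool" where
  "markov_kernel_of M MA K \<longleftrightarrow>
     (\<forall>x. prob_space (K x) \<and> sets (K x) = sets (borel :: real measure)) \<and>
     (\<forall>F\<in>sets borel. (\<lambda>x. measure (K x) F) \<in> borel_measurable MA) \<and>
     (\<forall>B\<in>sets MA. \<forall>F\<in>sets borel.
        emeasure M (B \<times> F) = (\<integral>\<^sup>+x. emeasure (K x) F * indicator B x \<partial>MA))"

definition regression :: "('a \<Rightarrow> real measure) \<Rightarrow> 'a \<Rightarrow> real" where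
  "regression K x = (\<integral>y. y \<partial>(K x))"

end

theory Submission imports Defs begin

lemma int_upper:
  fixes c :: real assumes c: "0 \<le> c" "c \<le> 1"
  shows "(\<integral>\<^sup>+y. ennreal (max (y - c) 0) \<partial>uniform_measure lborel {0..1::real}) = ennreal ((1-c)^2/2)"
proof -
  have "(\<integral>\<^sup>+y. ennreal (max (y - c) 0) \<partial>uniform_measure lborel {0..1::real})
     = (\<integral>\<^sup>+y. ennreal (max (y - c) 0) * indicator {0..1} y \<partial>lborel)"
    by (subst nn_integral_uniform_measure) (auto simp: divide_ennreal_def)
  also have "\<dots> = (\<integral>\<^sup>+y. ennreal (indicator {c..1} y * (y - c)) \<partial>lborel)"
    using c by (intro nn_integral_cong) (auto simp: indicator_def ennreal_neg)
  also have "\<dots> = ennreal ((1-c)^2/2)"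
  proof (rule nn_integral_has_integral_lborel)
    show "(\<lambda>y. indicator {c..1} y * (y - c)) \<in> borel_measurable borel" by measurable
    show "0 \<le> indicator {c..1} y * (y - c)" for y by (auto simp: indicator_def)
    have "((\<lambda>y. y - c) has_integral ((\<lambda>y. (y-c)^2/2) 1 - (\<lambda>y. (y-c)^2/2) c)) {c..1}"
      using c by (intro fundamental_theorem_of_calculus) (auto intro!: derivative_eq_intros simp: has_real_derivative_iff_has_vector_derivative[symmetric])
    then have hI: "((\<lambda>y. y - c) has_integral ((1-c)^2/2)) {c..1}" by simp
    then show "((\<lambda>y. indicator {c..1} y * (y - c)) has_integral ((1-c)^2/2)) UNIV"
      proof -
      have "(\<lambda>y. indicator {c..1} y * (y - c)) = (\<lambda>y. if y \<in> {c..1} then (y - c) else 0)" by (auto simp: indicator_def fun_eq_iff)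
      then show ?thesis using has_integral_restrict_UNIV[of "{c..1}" "\<lambda>y. (y - c)"] hI by simp
    qed
  qed
  finally show ?thesis .
qed

lemma int_lower:
  fixes c :: real assumes c: "0 \<le> c" "c \<le> 1"
  shows "(\<integral>\<^sup>+y. ennreal (max (c - y) 0) \<partial>uniform_measure lborel {0..1::real}) = ennreal (c^2/2)"
proof -
  have "(\<integral>\<^sup>+y. ennreal (max (c - y) 0) \<partial>uniform_measure lborel {0..1::real})
     = (\<integral>\<^sup>+y. ennreal (max (c - y) 0) * indicator {0..1} y \<partial>lborel)"
    by (subst nn_integral_uniform_measure) (auto simp: divide_ennreal_def)
  also have "\<dots> = (\<integral>\<^sup>+y. ennreal (indicator {0..c} y * (c - y)) \<partial>lborel)"
    using c by (intro nn_integral_cong) (auto simp: indicator_def ennreal_neg)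
  also have "\<dots> = ennreal (c^2/2)"
  proof (rule nn_integral_has_integral_lborel)
    show "(\<lambda>y. indicator {0..c} y * (c - y)) \<in> borel_measurable borel" by measurable
    show "0 \<le> indicator {0..c} y * (c - y)" for y by (auto simp: indicator_def)
    have "((\<lambda>y. c - y) has_integral ((\<lambda>y. c*y - y^2/2) c - (\<lambda>y. c*y - y^2/2) 0)) {0..c}"
      using c by (intro fundamental_theorem_of_calculus) (auto intro!: derivative_eq_intros simp: has_real_derivative_iff_has_vector_derivative[symmetric])
    then have hI: "((\<lambda>y. c - y) has_integral (c^2/2)) {0..c}" by (simp add: power2_eq_square)
    then show "((\<lambda>y. indicator {0..c} y * (c - y)) has_integral (c^2/2)) UNIV"
      proof -
      have "(\<lambda>y. indicator {0..c} y * (c - y)) = (\<lambda>y. if y \<in> {0..c} then (c - y) else 0)" by (auto simp: indicator_def fun_eq_iff)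
      then show ?thesis using has_integral_restrict_UNIV[of "{0..c}" "\<lambda>y. (c - y)"] hI by simp
    qed
  qed
  finally show ?thesis .
qed

lemma cube_closed: "closed (unit_cube :: (real^'n::finite) set)"
proof -
  have "unit_cube = (\<Inter>i. {x::real^'n. 0 \<le> x$i} \<inter> {x. x$i \<le> 1})"
    unfolding unit_cube_def by auto
  moreover have "closed (\<Inter>i. {x::real^'n. 0 \<le> x$i} \<inter> {x. x$i \<le> 1})"
    by (auto intro!: closed_INT closed_Int closed_Collect_le continuous_intros)
  ultimately show ?thesis by simp
qed


lemma pm_emeasure: "prob_space M \<Longrightarrow> emeasure M A = ennreal (measure M A)"
proof -
  assume "prob_space M"
  then interpret prob_space M .
  show ?thesis by (rule emeasure_eq_measure)
qed

lemma alg_bound: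
  fixes p a :: real
  assumes "0 \<le> p" "0 \<le> a" "a \<le> 1/2"
    and h: "ennreal (p - 1/2 + a) * ennreal p \<le> ennreal (p^2/2)"
  shows "p \<le> 1 - 2*a"
proof (rule ccontr)
  assume "\<not> p \<le> 1 - 2*a"
  then have t: "p - 1/2 + a > p/2" "p > 0" using assms by auto
  then have "ennreal ((p - 1/2 + a) * p) \<le> ennreal (p^2/2)" using h
    by (simp add: ennreal_mult)
  then have "(p - 1/2 + a) * p \<le> p^2/2" using t by (simp add: ennreal_le_iff)
  moreover have "(p - 1/2 + a) * p > (p/2) * p" using t by (intro mult_strict_right_mono) auto
  ultimately show False by (simp add: power2_eq_square)
qed

theorem theorem12:
  fixes MA :: "(real^'n::finite) measure" and MC :: "((real^'n::finite) \<times> real) measure"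
    and K :: "real^'n \<Rightarrow> real measure" and a :: real
  assumes "copula_measure MA"
    and "dcopula_measure MC"
    and "distr MC borel fst = MA"
    and "markov_kernel_of MC MA K"
    and "0 \<le> a" and "a \<le> 1/2"
  shows "measure MA {x \<in> unit_cube. \<bar>regression K x - 1/2\<bar> \<ge> a} \<le> min 1 (2 - 4*a)"
proof -
  define \<nu> where "\<nu> = uniform_measure lborel {0..1::real}"
  have pA: "prob_space MA" and setsA: "sets MA = sets borel"
    using assms(1) unfolding copula_measure_def by auto
  have spaceA: "space MA = UNIV" using sets_eq_imp_space_eq[OF setsA] by simp
  have pC: "prob_space MC" and setsC: "sets MC = sets borel"
    and sndC: "distr MC borel snd = \<nu>"
    using assms(2) unfolding dcopula_measure_def \<nu>_def by auto
  have spaceC: "space MC = UNIV" using sets_eq_imp_space_eq[OF setsC] by simp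
  have setsC': "sets MC = sets (borel \<Otimes>\<^sub>M borel)" by (subst borel_prod) (rule setsC)
  have Kprob: "\<And>x. prob_space (K x)" and Ksets: "\<And>x. sets (K x) = sets borel"
    and Kmeas: "\<And>F. F \<in> sets borel \<Longrightarrow> (\<lambda>x. measure (K x) F) \<in> borel_measurable MA"
    and Kdis: "\<And>B F. B \<in> sets MA \<Longrightarrow> F \<in> sets borel \<Longrightarrow>
        emeasure MC (B \<times> F) = (\<integral>\<^sup>+x. emeasure (K x) F * indicator B x \<partial>MA)"
    using assms(4) unfolding markov_kernel_of_def by auto
  have Km: "K \<in> MA \<rightarrow>\<^sub>M subprob_algebra borel"
  proof (rule measurable_subprob_algebra)
    show "subprob_space (K a)" for a using Kprob by (rule prob_space_imp_subprob_space)
    show "sets (K a) = sets borel" for a by (rule Ksets)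
    fix F :: "real set" assume F: "F \<in> sets borel"
    have "(\<lambda>x. ennreal (measure (K x) F)) \<in> borel_measurable MA"
      using measurable_compose[OF Kmeas[OF F] measurable_ennreal] by simp
    moreover have "emeasure (K x) F = ennreal (measure (K x) F)" for x
      using pm_emeasure[OF Kprob] by simp
    ultimately show "(\<lambda>x. emeasure (K x) F) \<in> borel_measurable MA" by simp
  qed
  have rmeas: "regression K \<in> borel_measurable MA"
    unfolding regression_def
    using measurable_compose[OF Km integral_measurable_subprob_algebra[of "\<lambda>y::real. y" borel]]
    by simp
  have bindeq: "MA \<bind> K = \<nu>"
  proof (rule measure_eqI)
    have sb: "sets (MA \<bind> K) = sets borel"
      by (rule sets_bind[where N=borel]) (auto simp: Ksets spaceA)
    then show "sets (MA \<bind> K) = sets \<nu>" by (simp add: \<nu>_def)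
    fix F assume "F \<in> sets (MA \<bind> K)"
    then have F: "F \<in> sets borel" using sb by simp
    have sndm: "snd \<in> MC \<rightarrow>\<^sub>M borel"
      using measurable_cong_sets[OF setsC' refl] measurable_snd by blast
    have "emeasure (MA \<bind> K) F = (\<integral>\<^sup>+x. emeasure (K x) F \<partial>MA)"
      using emeasure_bind[OF _ Km F] spaceA by simp
    also have "\<dots> = (\<integral>\<^sup>+x. emeasure (K x) F * indicator UNIV x \<partial>MA)" by simp
    also have "\<dots> = emeasure MC (UNIV \<times> F)"
      using Kdis[of UNIV F] F spaceA sets.top[of MA] by simp
    also have "\<dots> = emeasure (distr MC borel snd) F"
      proof -
      have eqU: "UNIV \<times> F = {x. snd x \<in> F}" by auto
      have "emeasure (distr MC borel snd) F = emeasure MC {x. snd x \<in> F}"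
        using F sndm spaceC by (simp add: emeasure_distr vimage_def)
      then show ?thesis by (simp only: eqU)
    qed
    finally show "emeasure (MA \<bind> K) F = emeasure \<nu> F" using sndC by simp
  qed
  have AE01: "AE x in MA. AE y in K x. y \<in> {0..1}"
  proof -
    have "AE y in MA \<bind> K. y \<in> {0..1::real}"
      unfolding bindeq \<nu>_def by (rule AE_uniform_measureI) auto
    then show ?thesis using AE_bind[OF Km, of "\<lambda>y. y \<in> {0..1::real}"] by simp
  qed
  have nnbind: "(\<integral>\<^sup>+x. \<integral>\<^sup>+y. g y \<partial>K x \<partial>MA) = (\<integral>\<^sup>+y. g y \<partial>\<nu>)"
    if g: "g \<in> borel_measurable borel" for g
    using nn_integral_bind[OF g Km] bindeq by simp
  have ints: "integrable (K x) f" if "AE y in K x. y \<in> {0..1}" and "f \<in> borel_measurable borel"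
    and "\<And>y. y \<in> {0..1} \<Longrightarrow> \<bar>f y\<bar> \<le> 1" for x and f :: "real \<Rightarrow> real"
  proof -
    interpret prob_space "K x" by (rule Kprob)
    show ?thesis
    proof (rule integrable_const_bound[where B=1])
      show "AE y in K x. norm (f y) \<le> 1" using that(1) by eventually_elim (use that(3) in auto)
      show "f \<in> borel_measurable (K x)" using that(2) measurable_cong_sets[OF Ksets refl] by blast
    qed
  qed
  have cube: "unit_cube \<in> sets MA" using setsA borel_closed[OF cube_closed] by simp
  define Sp where "Sp = {x \<in> unit_cube. 1/2 + a \<le> regression K x}"
  define Sm where "Sm = {x \<in> unit_cube. regression K x \<le> 1/2 - a}"
  have Sp: "Sp \<in> sets MA"
  proof -
    note rmeas[measurable]
    have m: "{x \<in> space MA. 1/2 + a \<le> regression K x} \<in> sets MA" by measurable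
    have "Sp = unit_cube \<inter> {x \<in> space MA. 1/2 + a \<le> regression K x}" by (auto simp: Sp_def spaceA)
    then show ?thesis using cube m by simp
  qed
  have Sm: "Sm \<in> sets MA"
  proof -
    note rmeas[measurable]
    have m: "{x \<in> space MA. regression K x \<le> 1/2 - a} \<in> sets MA" by measurable
    have "Sm = unit_cube \<inter> {x \<in> space MA. regression K x \<le> 1/2 - a}" by (auto simp: Sm_def spaceA)
    then show ?thesis using cube m by simp
  qed
  define p where "p = measure MA Sp"
  define q where "q = measure MA Sm"
  have p01: "0 \<le> p" "p \<le> 1" unfolding p_def using prob_space.prob_le_1[OF pA] by auto
  have q01: "0 \<le> q" "q \<le> 1" unfolding q_def using prob_space.prob_le_1[OF pA] by auto
  have emp: "emeasure MA Sp = ennreal p" unfolding p_def using pm_emeasure[OF pA] by simp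
  have emq: "emeasure MA Sm = ennreal q" unfolding q_def using pm_emeasure[OF pA] by simp
  have pb: "p \<le> 1 - 2*a"
  proof -
    define c where "c = 1 - p"
    have c: "0 \<le> c" "c \<le> 1" using p01 by (auto simp: c_def)
    have pt: "AE x in MA. ennreal (1/2 + a - c) * indicator Sp x \<le> (\<integral>\<^sup>+y. ennreal (max (y - c) 0) \<partial>K x)"
      using AE01
    proof eventually_elim
      case (elim x)
      show ?case
      proof (cases "x \<in> Sp")
        case False then show ?thesis by simp
      next
        case True
        interpret prob_space "K x" by (rule Kprob)
        have i1: "integrable (K x) (\<lambda>y. y)" by (rule ints[OF elim]) auto
        have i2: "integrable (K x) (\<lambda>y. max (y - c) 0)" by (rule ints[OF elim]) (use c in auto)
        have "regression K x \<le> (\<integral>y. c + max (y - c) 0 \<partial>K x)"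
          unfolding regression_def by (rule integral_mono) (use i1 i2 in auto)
        also have "\<dots> = c + (\<integral>y. max (y - c) 0 \<partial>K x)"
          using i2 by (simp add: prob_space)
        finally have le: "1/2 + a - c \<le> (\<integral>y. max (y - c) 0 \<partial>K x)" using True by (simp add: Sp_def)
        have "(\<integral>\<^sup>+y. ennreal (max (y - c) 0) \<partial>K x) = ennreal (\<integral>y. max (y - c) 0 \<partial>K x)"
          by (rule nn_integral_eq_integral[OF i2]) auto
        then show ?thesis using le True by (simp add: ennreal_leI)
      qed
    qed
    have "ennreal (1/2 + a - c) * emeasure MA Sp = (\<integral>\<^sup>+x. ennreal (1/2 + a - c) * indicator Sp x \<partial>MA)"
      using Sp by (simp add: nn_integral_cmult_indicator)
    also have "\<dots> \<le> (\<integral>\<^sup>+x. \<integral>\<^sup>+y. ennreal (max (y - c) 0) \<partial>K x \<partial>MA)"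
      by (rule nn_integral_mono_AE[OF pt])
    also have "\<dots> = (\<integral>\<^sup>+y. ennreal (max (y - c) 0) \<partial>\<nu>)" by (rule nnbind) measurable
    also have "\<dots> = ennreal ((1-c)^2/2)" unfolding \<nu>_def by (rule int_upper[OF c])
    finally have "ennreal (1/2 + a - c) * ennreal p \<le> ennreal ((1-c)^2/2)"
      using emp by simp
    moreover have "1/2 + a - c = p - 1/2 + a" "1 - c = p" by (auto simp: c_def)
    ultimately have "ennreal (p - 1/2 + a) * ennreal p \<le> ennreal (p^2/2)"
      by simp
    then show ?thesis using alg_bound p01 assms by blast
  qed
  have qb: "q \<le> 1 - 2*a"
  proof -
    define c where "c = q"
    have c: "0 \<le> c" "c \<le> 1" using q01 by (auto simp: c_def)
    have pt: "AE x in MA. ennreal (c - 1/2 + a) * indicator Sm x \<le> (\<integral>\<^sup>+y. ennreal (max (c - y) 0) \<partial>K x)"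
      using AE01
    proof eventually_elim
      case (elim x)
      show ?case
      proof (cases "x \<in> Sm")
        case False then show ?thesis by simp
      next
        case True
        interpret prob_space "K x" by (rule Kprob)
        have i1: "integrable (K x) (\<lambda>y. y)" by (rule ints[OF elim]) auto
        have i2: "integrable (K x) (\<lambda>y. max (c - y) 0)" by (rule ints[OF elim]) (use c in auto)
        have "(\<integral>y. c - max (c - y) 0 \<partial>K x) \<le> regression K x"
          unfolding regression_def by (rule integral_mono) (use i1 i2 in auto)
        moreover have "(\<integral>y. c - max (c - y) 0 \<partial>K x) = c - (\<integral>y. max (c - y) 0 \<partial>K x)"
          using i2 by (simp add: prob_space)
        ultimately have le: "c - 1/2 + a \<le> (\<integral>y. max (c - y) 0 \<partial>K x)" using True by (simp add: Sm_def)
        have "(\<integral>\<^sup>+y. ennreal (max (c - y) 0) \<partial>K x) = ennreal (\<integral>y. max (c - y) 0 \<partial>K x)"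
          by (rule nn_integral_eq_integral[OF i2]) auto
        then show ?thesis using le True by (simp add: ennreal_leI)
      qed
    qed
    have "ennreal (c - 1/2 + a) * emeasure MA Sm = (\<integral>\<^sup>+x. ennreal (c - 1/2 + a) * indicator Sm x \<partial>MA)"
      using Sm by (simp add: nn_integral_cmult_indicator)
    also have "\<dots> \<le> (\<integral>\<^sup>+x. \<integral>\<^sup>+y. ennreal (max (c - y) 0) \<partial>K x \<partial>MA)"
      by (rule nn_integral_mono_AE[OF pt])
    also have "\<dots> = (\<integral>\<^sup>+y. ennreal (max (c - y) 0) \<partial>\<nu>)" by (rule nnbind) measurable
    also have "\<dots> = ennreal (c^2/2)" unfolding \<nu>_def by (rule int_lower[OF c])
    finally have "ennreal (q - 1/2 + a) * ennreal q \<le> ennreal (q^2/2)"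
      using emq by (simp add: c_def)
    then show ?thesis using alg_bound q01 assms by blast
  qed
  have eq: "{x \<in> unit_cube. \<bar>regression K x - 1/2\<bar> \<ge> a} = Sp \<union> Sm"
    unfolding Sp_def Sm_def by auto
  have "measure MA (Sp \<union> Sm) \<le> p + q" unfolding p_def q_def by (rule measure_Un_le[OF Sp Sm])
  moreover have "measure MA (Sp \<union> Sm) \<le> 1" using prob_space.prob_le_1[OF pA] by simp
  ultimately show ?thesis using eq pb qb by simp
qed

end
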